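(* Suppose $\nu=\nu_1\times\nu_2\times\cdots\times\nu_d$ is a product probability measure on $\mathcal X=\{1,\dots,B\}^d$. Let $\mathfrak T_1$ and $\mathfrak T_2$ be two tree structures, and let $I_1,I_2\subset\{1,\dots,d\}$ be disjoint sets of indices such that $\mathfrak T_1$ and $\mathfrak T_2$ contain splits only on features in $I_1$ and $I_2$ respectively. Then every local decision stump of $\mathfrak T_1$ is orthogonal in $L^2(\nu)$ to every local decision stump of $\mathfrak T_2$.
   Context: A tree structure is a finite rooted binary tree whose internal nodes carry splitting rules $(v,t)$; each node corresponds to a rectangular region $\mathfrak t\subset\mathcal X$, with the root corresponding to $\mathcal X$, and an internal node $\mathfrak t$ with rule $(v,t)$ has children $\mathfrak t_L=\{\mathbf x\in\mathfrak t:x_v\le t\}$ and $\mathfrak t_R=\{\mathbf x\in\mathfrak t:x_v>t\}$ (both nonempty). A tree "splits on feature $v$" if some internal node has a rule with feature $v$. For each internal node $\mathfrak t$, the local decision stump is the function $$\psi(\mathbf x)=\frac{\nu(\mathfrak t_R)\mathbf 1\{\mathbf x\in\mathfrak t_L\}-\nu(\mathfrak t_L)\mathbf 1\{\mathbf x\in\mathfrak t_R\}}{\sqrt{\nu(\mathfrak t_L)\nu(\mathfrak t_R)}}.$$ *)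

theory Defs
  imports Complex_Main "HOL-Library.FuncSet"
begin

definition cube :: "nat \<Rightarrow> nat \<Rightarrow> (nat \<Rightarrow> nat) set" where
  "cube B d = PiE {1..d} (\<lambda>_. {1..B})"

text \<open>Product probability measure nu = nu_1 x ... x nu_d given by marginal
  probability mass functions p j on {1..B}.\<close>
definition is_marginals :: "nat \<Rightarrow> nat \<Rightarrow> (nat \<Rightarrow> nat \<Rightarrow> real) \<Rightarrow> bool" where
  "is_marginals B d p \<longleftrightarrow>
     (\<forall>j\<in>{1..d}. (\<forall>b\<in>{1..B}. p j b \<ge> 0) \<and> (\<Sum>b=1..B. p j b) = 1)"

definition pmass :: "nat \<Rightarrow> (nat \<Rightarrow> nat \<Rightarrow> real) \<Rightarrow> (nat \<Rightarrow> nat) \<Rightarrow> real" where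
  "pmass d p x = (\<Prod>j=1..d. p j (x j))"

definition nu :: "nat \<Rightarrow> nat \<Rightarrow> (nat \<Rightarrow> nat \<Rightarrow> real) \<Rightarrow> (nat \<Rightarrow> nat) set \<Rightarrow> real" where
  "nu B d p A = (\<Sum>x\<in>A \<inter> cube B d. pmass d p x)"

definition L2_inner :: "nat \<Rightarrow> nat \<Rightarrow> (nat \<Rightarrow> nat \<Rightarrow> real) \<Rightarrow>
    ((nat \<Rightarrow> nat) \<Rightarrow> real) \<Rightarrow> ((nat \<Rightarrow> nat) \<Rightarrow> real) \<Rightarrow> real" where
  "L2_inner B d p f g = (\<Sum>x\<in>cube B d. pmass d p x * f x * g x)"

datatype tree = Leaf | Node nat real tree tree

definition left_region :: "(nat \<Rightarrow> nat) set \<Rightarrow> nat \<Rightarrow> real \<Rightarrow> (nat \<Rightarrow> nat) set" where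
  "left_region R v t = {x\<in>R. real (x v) \<le> t}"

definition right_region :: "(nat \<Rightarrow> nat) set \<Rightarrow> nat \<Rightarrow> real \<Rightarrow> (nat \<Rightarrow> nat) set" where
  "right_region R v t = {x\<in>R. real (x v) > t}"

fun valid_tree :: "nat \<Rightarrow> (nat \<Rightarrow> nat) set \<Rightarrow> tree \<Rightarrow> bool" where
  "valid_tree d R Leaf = True"
| "valid_tree d R (Node v t l r) \<longleftrightarrow>
     v \<in> {1..d} \<and> left_region R v t \<noteq> {} \<and> right_region R v t \<noteq> {} \<and>
     valid_tree d (left_region R v t) l \<and> valid_tree d (right_region R v t) r"

definition is_tree_structure :: "nat \<Rightarrow> nat \<Rightarrow> tree \<Rightarrow> bool" where
  "is_tree_structure B d T \<longleftrightarrow> valid_tree d (cube B d) T"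

fun internal_nodes :: "(nat \<Rightarrow> nat) set \<Rightarrow> tree \<Rightarrow> ((nat \<Rightarrow> nat) set \<times> nat \<times> real) set" where
  "internal_nodes R Leaf = {}"
| "internal_nodes R (Node v t l r) =
     insert (R, v, t) (internal_nodes (left_region R v t) l \<union> internal_nodes (right_region R v t) r)"

fun split_features :: "tree \<Rightarrow> nat set" where
  "split_features Leaf = {}"
| "split_features (Node v t l r) = insert v (split_features l \<union> split_features r)"

definition stump :: "nat \<Rightarrow> nat \<Rightarrow> (nat \<Rightarrow> nat \<Rightarrow> real) \<Rightarrow> (nat \<Rightarrow> nat) set \<Rightarrow> nat \<Rightarrow> real
    \<Rightarrow> (nat \<Rightarrow> nat) \<Rightarrow> real" where
  "stump B d p R v t x =
     (nu B d p (right_region R v t) * (if x \<in> left_region R v t then 1 else 0)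
      - nu B d p (left_region R v t) * (if x \<in> right_region R v t then 1 else 0))
     / sqrt (nu B d p (left_region R v t) * nu B d p (right_region R v t))"

definition local_stumps :: "nat \<Rightarrow> nat \<Rightarrow> (nat \<Rightarrow> nat \<Rightarrow> real) \<Rightarrow> tree
    \<Rightarrow> ((nat \<Rightarrow> nat) \<Rightarrow> real) set" where
  "local_stumps B d p T = (\<lambda>(R, v, t). stump B d p R v t) ` internal_nodes (cube B d) T"

end

theory Submission
  imports Defs
begin

definition mrg :: "nat set \<Rightarrow> (nat \<Rightarrow> 'b) \<Rightarrow> (nat \<Rightarrow> 'b) \<Rightarrow> nat \<Rightarrow> 'b" where
  "mrg I a b = (\<lambda>i. if i \<in> I then a i else b i)"

lemma bij_mrg:
  assumes "I \<subseteq> K"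
  shows "bij_betw (\<lambda>(a,b). mrg I a b) (PiE I A \<times> PiE (K-I) A) (PiE K A)"
proof (rule bij_betwI[where g="\<lambda>x. (restrict x I, restrict x (K-I))"])
  show "(\<lambda>(a,b). mrg I a b) \<in> PiE I A \<times> PiE (K-I) A \<rightarrow> PiE K A"
    using assms by (auto simp: mrg_def PiE_def extensional_def Pi_def)
  show "(\<lambda>x. (restrict x I, restrict x (K-I))) \<in> PiE K A \<rightarrow> PiE I A \<times> PiE (K-I) A"
    using assms by auto
  show "(\<lambda>x. (restrict x I, restrict x (K-I))) ((\<lambda>(a,b). mrg I a b) ab) = ab"
    if "ab \<in> PiE I A \<times> PiE (K-I) A" for ab
    using that by (auto simp: mrg_def PiE_def extensional_def fun_eq_iff)
  show "(\<lambda>(a,b). mrg I a b) ((\<lambda>x. (restrict x I, restrict x (K-I))) x) = x"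
    if "x \<in> PiE K A" for x
    using that assms by (auto simp: mrg_def PiE_def extensional_def fun_eq_iff)
qed

lemma sum_split:
  assumes "I \<subseteq> K"
  shows "(\<Sum>x\<in>PiE K A. h x) = (\<Sum>a\<in>PiE I A. \<Sum>b\<in>PiE (K-I) A. h (mrg I a b))"
proof -
  have "(\<Sum>x\<in>PiE K A. h x) = (\<Sum>ab\<in>PiE I A \<times> PiE (K-I) A. h ((\<lambda>(a,b). mrg I a b) ab))"
    using sum.reindex_bij_betw[OF bij_mrg[OF assms(1)], of h A] by simp
  also have "\<dots> = (\<Sum>(a,b)\<in>PiE I A \<times> PiE (K-I) A. h (mrg I a b))"
    by (rule sum.cong) auto
  also have "\<dots> = (\<Sum>a\<in>PiE I A. \<Sum>b\<in>PiE (K-I) A. h (mrg I a b))"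
    by (rule sum.cartesian_product[symmetric])
  finally show ?thesis .
qed

lemma sum_split_prod:
  fixes h :: "(nat \<Rightarrow> 'b) \<Rightarrow> real"
  assumes "I \<subseteq> K"
    and "\<And>a b. a \<in> PiE I A \<Longrightarrow> b \<in> PiE (K-I) A \<Longrightarrow> h (mrg I a b) = U a * V b"
  shows "(\<Sum>x\<in>PiE K A. h x) = (\<Sum>a\<in>PiE I A. U a) * (\<Sum>b\<in>PiE (K-I) A. V b)"
  unfolding sum_split[OF assms(1)] sum_product
  by (intro sum.cong refl) (simp add: assms(2))

lemma indep:
  fixes q :: "nat \<Rightarrow> 'b \<Rightarrow> real" and f g :: "(nat \<Rightarrow> 'b) \<Rightarrow> real"
  assumes IK: "I \<subseteq> K" and fin: "finite K" and ne: "PiE K A \<noteq> {}"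
    and f: "\<And>x y. x \<in> PiE K A \<Longrightarrow> y \<in> PiE K A \<Longrightarrow> (\<forall>i\<in>I. x i = y i) \<Longrightarrow> f x = f y"
    and g: "\<And>x y. x \<in> PiE K A \<Longrightarrow> y \<in> PiE K A \<Longrightarrow> (\<forall>i\<in>K-I. x i = y i) \<Longrightarrow> g x = g y"
  shows "(\<Sum>x\<in>PiE K A. (\<Prod>j\<in>K. q j (x j)) * f x * g x) * (\<Sum>x\<in>PiE K A. (\<Prod>j\<in>K. q j (x j)))
       = (\<Sum>x\<in>PiE K A. (\<Prod>j\<in>K. q j (x j)) * f x) * (\<Sum>x\<in>PiE K A. (\<Prod>j\<in>K. q j (x j)) * g x)"
proof -
  obtain x0 where x0: "x0 \<in> PiE K A" using ne by blast
  define a0 where "a0 = restrict x0 I"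
  define b0 where "b0 = restrict x0 (K-I)"
  have a0: "a0 \<in> PiE I A" using x0 IK unfolding a0_def by auto
  have b0: "b0 \<in> PiE (K-I) A" using x0 unfolding b0_def by auto
  define F where "F a = f (mrg I a b0)" for a
  define G where "G b = g (mrg I a0 b)" for b
  define WI where "WI a = (\<Prod>j\<in>I. q j (a j))" for a
  define WJ where "WJ b = (\<Prod>j\<in>K-I. q j (b j))" for b
  have mem: "mrg I a b \<in> PiE K A" if "a \<in> PiE I A" "b \<in> PiE (K-I) A" for a b
    using bij_betw_apply[OF bij_mrg[OF IK], of "(a,b)" A] that by simp
  have W: "(\<Prod>j\<in>K. q j (mrg I a b j)) = WI a * WJ b" for a b
  proof -
    have fI: "finite I" using IK fin finite_subset by blast
    have "(\<Prod>j\<in>K. q j (mrg I a b j)) = (\<Prod>j\<in>I. q j (mrg I a b j)) * (\<Prod>j\<in>K-I. q j (mrg I a b j))"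
      using prod.subset_diff[OF IK fin] by (simp add: mult.commute)
    also have "\<dots> = WI a * WJ b"
      unfolding WI_def WJ_def by (auto simp: mrg_def intro!: arg_cong2[where f="(*)"] prod.cong)
    finally show ?thesis .
  qed
  have Fe: "f (mrg I a b) = F a" if "a \<in> PiE I A" "b \<in> PiE (K-I) A" for a b
    unfolding F_def using that b0 by (intro f mem) (auto simp: mrg_def)
  have Ge: "g (mrg I a b) = G b" if "a \<in> PiE I A" "b \<in> PiE (K-I) A" for a b
    unfolding G_def using that a0 by (intro g mem) (auto simp: mrg_def)
  have s1: "(\<Sum>x\<in>PiE K A. (\<Prod>j\<in>K. q j (x j)) * f x * g x) = (\<Sum>a\<in>PiE I A. WI a * F a) * (\<Sum>b\<in>PiE (K-I) A. WJ b * G b)"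
    by (rule sum_split_prod[OF IK]) (simp add: W Fe Ge)
  have s2: "(\<Sum>x\<in>PiE K A. (\<Prod>j\<in>K. q j (x j))) = (\<Sum>a\<in>PiE I A. WI a) * (\<Sum>b\<in>PiE (K-I) A. WJ b)"
    by (rule sum_split_prod[OF IK]) (simp add: W)
  have s3: "(\<Sum>x\<in>PiE K A. (\<Prod>j\<in>K. q j (x j)) * f x) = (\<Sum>a\<in>PiE I A. WI a * F a) * (\<Sum>b\<in>PiE (K-I) A. WJ b)"
    by (rule sum_split_prod[OF IK]) (simp add: W Fe)
  have s4: "(\<Sum>x\<in>PiE K A. (\<Prod>j\<in>K. q j (x j)) * g x) = (\<Sum>a\<in>PiE I A. WI a) * (\<Sum>b\<in>PiE (K-I) A. WJ b * G b)"
    by (rule sum_split_prod[OF IK]) (simp add: W Ge)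
  show ?thesis unfolding s1 s2 s3 s4 by (simp add: algebra_simps)
qed

definition detI :: "(nat \<Rightarrow> nat) set \<Rightarrow> nat set \<Rightarrow> (nat \<Rightarrow> nat) set \<Rightarrow> bool" where
  "detI C I R \<longleftrightarrow> (\<forall>x\<in>C. \<forall>y\<in>C. (\<forall>i\<in>I. x i = y i) \<longrightarrow> (x \<in> R \<longleftrightarrow> y \<in> R))"

lemma detI_left: "detI C I R \<Longrightarrow> v \<in> I \<Longrightarrow> detI C I (left_region R v t)"
  unfolding detI_def left_region_def mem_Collect_eq by metis

lemma detI_right: "detI C I R \<Longrightarrow> v \<in> I \<Longrightarrow> detI C I (right_region R v t)"
  unfolding detI_def right_region_def mem_Collect_eq by metis

lemma nodes_det:
  "detI C I R \<Longrightarrow> split_features T \<subseteq> I \<Longrightarrow> (R', v, t) \<in> internal_nodes R T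
   \<Longrightarrow> detI C I R' \<and> v \<in> I"
proof (induction T arbitrary: R)
  case Leaf
  then show ?case by simp
next
  case (Node v0 t0 l r)
  have v0: "v0 \<in> I" and sl: "split_features l \<subseteq> I" and sr: "split_features r \<subseteq> I"
    using Node.prems(2) by auto
  from Node.prems(3) have "(R', v, t) = (R, v0, t0) \<or> (R', v, t) \<in> internal_nodes (left_region R v0 t0) l
     \<or> (R', v, t) \<in> internal_nodes (right_region R v0 t0) r" by simp
  then show ?case
  proof (elim disjE)
    assume "(R', v, t) = (R, v0, t0)" then show ?thesis using Node.prems(1) v0 by simp
  next
    assume "(R', v, t) \<in> internal_nodes (left_region R v0 t0) l"
    then show ?thesis using Node.IH(1)[OF detI_left[OF Node.prems(1) v0] sl] by blast
  next
    assume "(R', v, t) \<in> internal_nodes (right_region R v0 t0) r"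
    then show ?thesis using Node.IH(2)[OF detI_right[OF Node.prems(1) v0] sr] by blast
  qed
qed

lemma stump_det:
  assumes "detI C I R" "v \<in> I" "x \<in> C" "y \<in> C" "\<forall>i\<in>I. x i = y i"
  shows "stump B d p R v t x = stump B d p R v t y"
proof -
  have eL: "x \<in> left_region R v t \<longleftrightarrow> y \<in> left_region R v t"
    using detI_left[OF assms(1,2)] assms(3-5) unfolding detI_def by blast
  have eR: "x \<in> right_region R v t \<longleftrightarrow> y \<in> right_region R v t"
    using detI_right[OF assms(1,2)] assms(3-5) unfolding detI_def by blast
  show ?thesis unfolding stump_def eL eR ..
qed

lemma ind_sum: "(\<Sum>x\<in>cube B d. pmass d p x * (if x \<in> S then 1 else 0)) = nu B d p S"
proof -
  have "finite (cube B d)" by (simp add: cube_def finite_PiE)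
  then have e: "sum (pmass d p) (cube B d \<inter> S) = (\<Sum>x\<in>cube B d. if x \<in> S then pmass d p x else 0)"
    by (rule sum.inter_restrict)
  show ?thesis unfolding nu_def Int_commute[of S] e by (intro sum.cong) auto
qed

lemma aux_alg: "(c::real) * ((a*u - b*w)/s) = (a*(c*u) - b*(c*w))/s"
  by (simp add: algebra_simps)

lemma stump_mean: "(\<Sum>x\<in>cube B d. pmass d p x * stump B d p R v t x) = 0"
proof -
  define a where "a = nu B d p (right_region R v t)"
  define b where "b = nu B d p (left_region R v t)"
  define s where "s = sqrt (nu B d p (left_region R v t) * nu B d p (right_region R v t))"
  define X where "X x = pmass d p x * (if x \<in> left_region R v t then 1 else 0)" for x
  define Y where "Y x = pmass d p x * (if x \<in> right_region R v t then 1 else 0)" for x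
  have "(\<Sum>x\<in>cube B d. pmass d p x * stump B d p R v t x)
     = (\<Sum>x\<in>cube B d. (a * X x - b * Y x) / s)"
    unfolding stump_def X_def Y_def a_def b_def s_def aux_alg ..
  also have "\<dots> = (a * (\<Sum>x\<in>cube B d. X x) - b * (\<Sum>x\<in>cube B d. Y x)) / s"
    unfolding sum_divide_distrib[symmetric] sum_subtractf sum_distrib_left ..
  also have "\<dots> = (a * b - b * a) / s"
    unfolding X_def Y_def ind_sum a_def b_def ..
  also have "\<dots> = 0" by simp
  finally show ?thesis .
qed

lemma pmass_total:
  assumes "is_marginals B d p"
  shows "(\<Sum>x\<in>cube B d. pmass d p x) = 1"
proof -
  have "(\<Sum>x\<in>cube B d. pmass d p x) = (\<Prod>j\<in>{1..d}. \<Sum>b\<in>{1..B}. p j b)"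
    unfolding cube_def pmass_def by (rule prod_sum_PiE[symmetric]) auto
  also have "\<dots> = (\<Prod>j\<in>{1..d}. 1)"
    using assms unfolding is_marginals_def by (intro prod.cong refl) auto
  finally show ?thesis by simp
qed

theorem lemmaF1:
  fixes B d :: nat and p :: "nat \<Rightarrow> nat \<Rightarrow> real"
    and T1 T2 :: tree and I1 I2 :: "nat set"
  assumes "is_marginals B d p"
    and "is_tree_structure B d T1" and "is_tree_structure B d T2"
    and "I1 \<subseteq> {1..d}" and "I2 \<subseteq> {1..d}" and "I1 \<inter> I2 = {}"
    and "split_features T1 \<subseteq> I1" and "split_features T2 \<subseteq> I2"
    and "\<psi>1 \<in> local_stumps B d p T1" and "\<psi>2 \<in> local_stumps B d p T2"
  shows "L2_inner B d p \<psi>1 \<psi>2 = 0"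
proof (cases "cube B d = {}")
  case True
  then show ?thesis unfolding L2_inner_def by simp
next
  case False
  let ?C = "cube B d"
  have cube_det: "detI ?C I ?C" for I unfolding detI_def by auto
  obtain R1 v1 t1 where n1: "(R1, v1, t1) \<in> internal_nodes ?C T1" and psi1: "\<psi>1 = stump B d p R1 v1 t1"
    using assms(9) unfolding local_stumps_def by auto
  obtain R2 v2 t2 where n2: "(R2, v2, t2) \<in> internal_nodes ?C T2" and psi2: "\<psi>2 = stump B d p R2 v2 t2"
    using assms(10) unfolding local_stumps_def by auto
  have d1: "detI ?C I1 R1" "v1 \<in> I1" using nodes_det[OF cube_det assms(7) n1] by auto
  have d2: "detI ?C I2 R2" "v2 \<in> I2" using nodes_det[OF cube_det assms(8) n2] by auto
  have key: "(\<Sum>x\<in>?C. pmass d p x * \<psi>1 x * \<psi>2 x) * (\<Sum>x\<in>?C. pmass d p x)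
     = (\<Sum>x\<in>?C. pmass d p x * \<psi>1 x) * (\<Sum>x\<in>?C. pmass d p x * \<psi>2 x)"
    unfolding cube_def pmass_def
  proof (rule indep[OF assms(4) finite_atLeastAtMost])
    show "PiE {1..d} (\<lambda>_. {1..B}) \<noteq> {}" using False unfolding cube_def .
    show "\<psi>1 x = \<psi>1 y" if "x \<in> PiE {1..d} (\<lambda>_. {1..B})" "y \<in> PiE {1..d} (\<lambda>_. {1..B})"
      "\<forall>i\<in>I1. x i = y i" for x y
      unfolding psi1 using d1 that unfolding cube_def[symmetric] by (rule stump_det)
    show "\<psi>2 x = \<psi>2 y" if "x \<in> PiE {1..d} (\<lambda>_. {1..B})" "y \<in> PiE {1..d} (\<lambda>_. {1..B})"
      "\<forall>i\<in>{1..d}-I1. x i = y i" for x y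
    proof -
      have "\<forall>i\<in>I2. x i = y i" using that(3) assms(5,6) by blast
      then show ?thesis
        unfolding psi2 using d2 that(1,2) unfolding cube_def[symmetric] by (intro stump_det) 
    qed
  qed
  have m1: "(\<Sum>x\<in>?C. pmass d p x * \<psi>1 x) = 0" unfolding psi1 by (rule stump_mean)
  have tot: "(\<Sum>x\<in>?C. pmass d p x) = 1" by (rule pmass_total[OF assms(1)])
  have "(\<Sum>x\<in>?C. pmass d p x * \<psi>1 x * \<psi>2 x)
     = (\<Sum>x\<in>?C. pmass d p x * \<psi>1 x * \<psi>2 x) * (\<Sum>x\<in>?C. pmass d p x)"
    by (simp only: tot mult_1_right)
  also have "\<dots> = 0" unfolding key m1 by (simp only: mult_zero_left)
  finally show ?thesis unfolding L2_inner_def .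
qed

end
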